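(* Let $\alpha_1,\alpha_2>0$ satisfy $\alpha_1-\alpha_2\ge \sqrt{2}\,e$. Let $p$ be analytic in $\mathbb{D}$ with $p(0)=1$. If $$1+\alpha_1 zp'(z)+\alpha_2 z^2p''(z)\prec z+\sqrt{1+z^2},$$ then $p(z)\prec e^z$.
   Context: $\mathbb{D}$ is the open unit disk. For $g,h$ analytic in $\mathbb{D}$, $g\prec h$ means there is an analytic $w:\mathbb{D}\to\mathbb{D}$ with $w(0)=0$ and $g=h\circ w$. $\sqrt{1+z^2}$ is the branch analytic in $\mathbb{D}$ with value $1$ at $0$. *)

theory Defs
  imports "HOL-Complex_Analysis.Complex_Analysis"
begin

definition subordinate :: "(complex \<Rightarrow> complex) \<Rightarrow> (complex \<Rightarrow> complex) \<Rightarrow> bool" where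
  "subordinate g h \<longleftrightarrow>
     (\<exists>w. w holomorphic_on ball 0 1 \<and> w ` ball 0 1 \<subseteq> ball 0 1 \<and> w 0 = 0 \<and>
          (\<forall>z\<in>ball 0 1. g z = h (w z)))"

end

theory Submission
  imports Defs
begin

lemma step1:
  fixes r :: "complex \<Rightarrow> complex" and \<beta> M :: real
  assumes b: "\<beta> > 0" and hol: "r holomorphic_on ball 0 1"
    and bnd: "\<And>\<zeta>. \<zeta> \<in> ball 0 1 \<Longrightarrow> norm (\<zeta> * deriv r \<zeta> + of_real \<beta> * r \<zeta>) \<le> M * norm \<zeta>"
    and z: "z \<in> ball 0 1"
  shows "norm (r z) \<le> M * norm z / (\<beta> + 1)"
proof -
  have tz: "of_real t * z \<in> ball 0 1" if "0 \<le> t" "t \<le> 1" for t :: real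
    using z that by (auto simp: norm_mult intro: le_less_trans[OF mult_left_le_one_le])
  have dr: "(r has_field_derivative deriv r c) (at c)" if "c \<in> ball 0 1" for c
    using hol that by (auto intro: holomorphic_derivI)
  define f where "f t = of_real (t powr \<beta>) * r (of_real t * z)" for t :: real
  define f' where "f' t = of_real (t powr \<beta>) * (z * deriv r (of_real t * z)) + of_real (\<beta> * t powr (\<beta> - 1)) * r (of_real t * z)" for t :: real
  define \<phi> where "\<phi> t = M * norm z * t powr (\<beta> + 1) / (\<beta> + 1)" for t :: real
  define \<phi>' where "\<phi>' t = M * norm z * t powr \<beta>" for t :: real
  have "norm (f 1 - f 0) \<le> \<phi> 1 - \<phi> 0"
  proof (rule differentiable_bound_general[of 0 1 f \<phi> f' \<phi>'])
    have c1: "continuous_on {0..1} (\<lambda>x::real. x powr \<beta>)"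
      using continuous_on_powr'[OF continuous_on_id continuous_on_const, of "{0..1}" \<beta>] b by auto
    have "continuous_on (ball 0 1) r" using hol holomorphic_on_imp_continuous_on by blast
    moreover have "continuous_on {0..1} (\<lambda>x::real. of_real x * z)" by (intro continuous_intros)
    ultimately have c2: "continuous_on {0..1} (\<lambda>x::real. r (of_real x * z))"
      using tz by (auto intro: continuous_on_compose2)
    show "continuous_on {0..1} f"
      unfolding f_def by (intro continuous_on_mult continuous_on_of_real c1 c2)
    show "continuous_on {0..1} \<phi>"
      unfolding \<phi>_def using continuous_on_powr'[OF continuous_on_id continuous_on_const, of "{0..1}" "\<beta>+1"] b
      by (auto intro!: continuous_intros)
  next
    fix t :: real assume t: "0 < t" "t < 1"
    have "((\<lambda>x. r (of_real x * z)) has_vector_derivative z * deriv r (of_real t * z)) (at t)"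
    proof -
      have "((\<lambda>c. r (c * z)) has_field_derivative deriv r (of_real t * z) * z) (at (of_real t))"
        using dr[OF tz] t by (auto intro!: derivative_eq_intros DERIV_chain2[where f=r])
      then have "((\<lambda>x. r (of_real x * z)) has_vector_derivative deriv r (of_real t * z) * z) (at t)"
        by (rule has_vector_derivative_real_field)
      then show ?thesis by (simp add: mult.commute)
    qed
    moreover have "((\<lambda>x. x powr \<beta>) has_real_derivative \<beta> * t powr (\<beta> - 1)) (at t)"
      using t(1) by (rule has_real_derivative_powr)
    ultimately show "(f has_vector_derivative f' t) (at t)"
      unfolding f_def f'_def using t by (auto intro!: derivative_eq_intros)
    have "((\<lambda>x. x powr (\<beta>+1)) has_real_derivative (\<beta>+1) * t powr \<beta>) (at t)"
      using has_real_derivative_powr[OF t(1), of "\<beta>+1"] by simp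
    then have "(\<phi> has_real_derivative \<phi>' t) (at t)"
      unfolding \<phi>_def \<phi>'_def using b t by (auto intro!: derivative_eq_intros)
    then show "(\<phi> has_vector_derivative \<phi>' t) (at t)"
      by (simp add: has_real_derivative_iff_has_vector_derivative)
    have pw: "t powr \<beta> = t powr (\<beta> - 1) * t" using t by (simp add: powr_diff)
    have "f' t = of_real (t powr (\<beta> - 1)) * ((of_real t * z) * deriv r (of_real t * z) + of_real \<beta> * r (of_real t * z))"
      unfolding f'_def pw by (simp add: algebra_simps)
    then have "norm (f' t) = t powr (\<beta> - 1) * norm ((of_real t * z) * deriv r (of_real t * z) + of_real \<beta> * r (of_real t * z))"
      by (simp add: norm_mult)
    also have "\<dots> \<le> t powr (\<beta> - 1) * (M * norm (of_real t * z))"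
      using bnd[OF tz] t by (intro mult_left_mono) auto
    also have "\<dots> = \<phi>' t" unfolding \<phi>'_def pw using t by (simp add: norm_mult)
    finally show "norm (f' t) \<le> \<phi>' t" .
  qed simp
  then show ?thesis unfolding f_def \<phi>_def using b by simp
qed

lemma step2:
  fixes q :: "complex \<Rightarrow> complex" and K :: real
  assumes hol: "q holomorphic_on ball 0 1"
    and bnd: "\<And>\<zeta>. \<zeta> \<in> ball 0 1 \<Longrightarrow> norm (\<zeta> * deriv q \<zeta>) \<le> K * norm \<zeta>"
    and z: "z \<in> ball 0 1"
  shows "norm (q z - q 0) \<le> K * norm z"
proof -
  have tz: "of_real t * z \<in> ball 0 1" if "0 \<le> t" "t \<le> 1" for t :: real
    using z that by (auto simp: norm_mult intro: le_less_trans[OF mult_left_le_one_le])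
  have dr: "(q has_field_derivative deriv q c) (at c)" if "c \<in> ball 0 1" for c
    using hol that by (auto intro: holomorphic_derivI)
  define f where "f t = q (of_real t * z)" for t :: real
  define f' where "f' t = z * deriv q (of_real t * z)" for t :: real
  define \<phi> where "\<phi> t = K * norm z * t" for t :: real
  have "norm (f 1 - f 0) \<le> \<phi> 1 - \<phi> 0"
  proof (rule differentiable_bound_general[of 0 1 f \<phi> f' "\<lambda>_. K * norm z"])
    have "continuous_on (ball 0 1) q" using hol holomorphic_on_imp_continuous_on by blast
    moreover have "continuous_on {0..1} (\<lambda>x::real. of_real x * z)" by (intro continuous_intros)
    ultimately show "continuous_on {0..1} f"
      unfolding f_def using tz by (auto intro: continuous_on_compose2)
    show "continuous_on {0..1} \<phi>"
      unfolding \<phi>_def by (auto intro!: continuous_intros)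
  next
    fix t :: real assume t: "0 < t" "t < 1"
    have "((\<lambda>c. q (c * z)) has_field_derivative deriv q (of_real t * z) * z) (at (of_real t))"
      using dr[OF tz] t by (auto intro!: derivative_eq_intros DERIV_chain2[where f=q])
    then have "((\<lambda>x. q (of_real x * z)) has_vector_derivative deriv q (of_real t * z) * z) (at t)"
      by (rule has_vector_derivative_real_field)
    then show "(f has_vector_derivative f' t) (at t)" unfolding f_def f'_def by (simp add: mult.commute)
    have "(\<phi> has_real_derivative K * norm z) (at t)"
      unfolding \<phi>_def by (auto intro!: derivative_eq_intros)
    then show "(\<phi> has_vector_derivative K * norm z) (at t)"
      by (simp add: has_real_derivative_iff_has_vector_derivative)
    have "t * norm (f' t) = norm ((of_real t * z) * deriv q (of_real t * z))"
      unfolding f'_def using t by (simp add: norm_mult)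
    also have "\<dots> \<le> K * (t * norm z)" using bnd[OF tz] t by (simp add: norm_mult)
    finally show "norm (f' t) \<le> K * norm z" using t
      by (metis (no_types, opaque_lifting) mult.assoc mult.left_commute mult_le_cancel_left_pos)
  qed simp
  then show ?thesis unfolding f_def \<phi>_def by simp
qed

lemma ln_bound:
  fixes e :: complex
  assumes e: "norm e < 1"
  shows "norm (Ln (1 + e)) \<le> - ln (1 - norm e)"
proof -
  have Re: "Re (1 + of_real t * e) > 0" if "0 \<le> t" "t \<le> 1" for t :: real
  proof -
    have "\<bar>Re (of_real t * e)\<bar> \<le> norm (of_real t * e)" by (rule abs_Re_le_cmod)
    also have "\<dots> = t * norm e" using that by (simp add: norm_mult)
    also have "\<dots> < 1" using that e
      by (metis le_less_trans mult_left_le_one_le norm_ge_zero)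
    finally show ?thesis by simp
  qed
  have nn: "1 + of_real t * e \<notin> \<real>\<^sub>\<le>\<^sub>0" if "0 \<le> t" "t \<le> 1" for t :: real
    using Re[OF that] by (auto simp: complex_nonpos_Reals_iff)
  have lb: "norm (1 + of_real t * e) \<ge> 1 - t * norm e" if "0 \<le> t" for t :: real
    using norm_diff_ineq[of 1 "of_real t * e"] that by (simp add: norm_mult)
  define f where "f t = Ln (1 + of_real t * e)" for t :: real
  define f' where "f' t = e * inverse (1 + of_real t * e)" for t :: real
  define \<phi> where "\<phi> t = - ln (1 - t * norm e)" for t :: real
  define \<phi>' where "\<phi>' t = norm e / (1 - t * norm e)" for t :: real
  have pos: "1 - t * norm e > 0" if "0 \<le> t" "t \<le> 1" for t :: real
    using that e by (metis diff_gt_0_iff_gt le_less_trans mult_left_le_one_le norm_ge_zero)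
  have "norm (f 1 - f 0) \<le> \<phi> 1 - \<phi> 0"
  proof (rule differentiable_bound_general[of 0 1 f \<phi> f' \<phi>'])
    have "continuous_on {c. Re c > 0} Ln"
      by (rule continuous_on_Ln) (auto simp: complex_nonpos_Reals_iff)
    moreover have "continuous_on {0..1} (\<lambda>x::real. 1 + of_real x * e)" by (intro continuous_intros)
    ultimately show "continuous_on {0..1} f"
      unfolding f_def using Re by (auto intro: continuous_on_compose2)
    show "continuous_on {0..1} \<phi>"
    proof -
      have "\<forall>t\<in>{0..1}. 1 - t * norm e \<noteq> 0" using pos by force
      then show ?thesis unfolding \<phi>_def by (auto intro!: continuous_intros)
    qed
  next
    fix t :: real assume t: "0 < t" "t < 1"
    have "((\<lambda>c. Ln (1 + c * e)) has_field_derivative inverse (1 + of_real t * e) * e) (at (of_real t))"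
      using has_field_derivative_Ln[OF nn[of t]] t by (auto intro!: derivative_eq_intros DERIV_chain2[where f=Ln])
    then have "((\<lambda>x. Ln (1 + of_real x * e)) has_vector_derivative inverse (1 + of_real t * e) * e) (at t)"
      by (rule has_vector_derivative_real_field)
    then show "(f has_vector_derivative f' t) (at t)" unfolding f_def f'_def by (simp add: mult.commute)
    have "(\<phi> has_real_derivative \<phi>' t) (at t)"
      unfolding \<phi>_def \<phi>'_def using pos[of t] t by (auto intro!: derivative_eq_intros simp: field_simps)
    then show "(\<phi> has_vector_derivative \<phi>' t) (at t)"
      by (simp add: has_real_derivative_iff_has_vector_derivative)
    have "norm (f' t) = norm e / norm (1 + of_real t * e)"
      unfolding f'_def by (simp add: norm_mult norm_inverse divide_inverse)
    also have "\<dots> \<le> \<phi>' t" unfolding \<phi>'_def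
      using lb[of t] pos[of t] t by (intro divide_left_mono) (auto intro!: mult_pos_pos)
    finally show "norm (f' t) \<le> \<phi>' t" .
  qed simp
  then show ?thesis unfolding f_def \<phi>_def by simp
qed

lemma csqrt_bound: "norm (csqrt (1 + u\<^sup>2) - 1) \<le> norm u ^ 2"
proof -
  define s where "s = csqrt (1 + u\<^sup>2)"
  have "(s - 1) * (s + 1) = u\<^sup>2" unfolding s_def by (simp add: algebra_simps power2_eq_square[symmetric])
  then have eq: "norm (s - 1) * norm (s + 1) = norm u ^ 2" by (metis norm_mult norm_power)
  have "1 \<le> Re (s + 1)" using Re_csqrt[of "1 + u\<^sup>2"] unfolding s_def by simp
  also have "\<dots> \<le> norm (s + 1)" by (rule complex_Re_le_cmod)
  finally have "norm (s - 1) \<le> norm (s - 1) * norm (s + 1)"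
    by (metis mult.right_neutral mult_left_mono norm_ge_zero)
  then show ?thesis using eq unfolding s_def by simp
qed

lemma e_bound: "exp 1 > (2.44::real)"
proof -
  have "(1 + 1/4) powr 4 < exp (1::real)" by (rule exp_1_gt_powr) simp
  moreover have "(1 + 1/4) powr 4 = (5/4::real)^4" using powr_numeral[of "5/4::real" "num.Bit0 (num.Bit0 num.One)"] by simp
  moreover have "(5/4::real)^4 = 625/256" by (simp add: eval_nat_numeral)
  ultimately show ?thesis by simp
qed

theorem theorem4p6:
  fixes \<alpha>1 \<alpha>2 :: real and p :: "complex \<Rightarrow> complex"
  assumes "\<alpha>1 > 0" and "\<alpha>2 > 0"
    and "\<alpha>1 - \<alpha>2 \<ge> sqrt 2 * exp 1"
    and "p holomorphic_on ball 0 1"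
    and "p 0 = 1"
    and "subordinate
           (\<lambda>z. 1 + of_real \<alpha>1 * z * deriv p z + of_real \<alpha>2 * z^2 * deriv (deriv p) z)
           (\<lambda>z. z + csqrt (1 + z^2))"
  shows "subordinate p exp"
proof -
  note a1 = assms(1) and a2 = assms(2) and a12 = assms(3) and hp = assms(4) and p0 = assms(5)
  obtain w where wh: "w holomorphic_on ball 0 1" and wim: "w ` ball 0 1 \<subseteq> ball 0 1"
    and w0: "w 0 = 0"
    and weq: "\<And>z. z \<in> ball 0 1 \<Longrightarrow> 1 + of_real \<alpha>1 * z * deriv p z + of_real \<alpha>2 * z^2 * deriv (deriv p) z
               = w z + csqrt (1 + (w z)^2)"
    using assms(6) unfolding subordinate_def by blast
  have wle: "norm (w z) \<le> norm z" if "z \<in> ball 0 1" for z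
  proof -
    have "\<And>u. norm u < 1 \<Longrightarrow> norm (w u) < 1" using wim by force
    then show ?thesis using Schwarz_Lemma(1)[OF wh w0, of z] that by auto
  qed
  define G where "G z = of_real \<alpha>1 * z * deriv p z + of_real \<alpha>2 * z^2 * deriv (deriv p) z" for z
  have Gb: "norm (G z) \<le> 2 * norm z" if z: "z \<in> ball 0 1" for z
  proof -
    have "G z = w z + (csqrt (1 + (w z)^2) - 1)" using weq[OF z] unfolding G_def by (simp add: algebra_simps)
    then have "norm (G z) \<le> norm (w z) + norm (w z) ^ 2"
      by (metis add_mono csqrt_bound norm_triangle_le order_refl)
    also have "\<dots> \<le> norm z + norm z" 
    proof -
      have "norm (w z) ^ 2 \<le> norm (w z)" using wle[OF z] z
        by (metis less_eq_real_def mem_ball_0 norm_ge_zero order_le_less_trans power2_eq_square mult_left_le_one_le)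
      then show ?thesis using wle[OF z] by linarith
    qed
    finally show ?thesis by simp
  qed
  have hdp: "deriv p holomorphic_on ball 0 1" using holomorphic_deriv[OF hp] by simp
  define r where "r z = z * deriv p z" for z
  have hr: "r holomorphic_on ball 0 1" unfolding r_def by (intro holomorphic_intros hdp)
  have dr: "deriv r z = deriv p z + z * deriv (deriv p) z" if z: "z \<in> ball 0 1" for z
  proof -
    have "(deriv p has_field_derivative deriv (deriv p) z) (at z)"
      using hdp z by (auto intro: holomorphic_derivI)
    then have "(r has_field_derivative deriv p z + z * deriv (deriv p) z) (at z)"
      unfolding r_def by (auto intro!: derivative_eq_intros)
    then show ?thesis by (rule DERIV_imp_deriv)
  qed
  define \<beta> where "\<beta> = (\<alpha>1 - \<alpha>2) / \<alpha>2"
  have s2pos: "sqrt 2 * exp 1 > 0" by simp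
  have bpos: "\<beta> > 0" unfolding \<beta>_def by (rule divide_pos_pos) (use a2 a12 s2pos in linarith)+
  have b1: "\<beta> + 1 = \<alpha>1 / \<alpha>2" unfolding \<beta>_def using a2 by (simp add: field_simps)
  have rb: "norm (r z) \<le> (2 / \<alpha>1) * norm z" if z: "z \<in> ball 0 1" for z
  proof -
    have "norm (r z) \<le> (2 / \<alpha>2) * norm z / (\<beta> + 1)"
    proof (rule step1[OF bpos hr _ z])
      fix \<zeta> :: complex assume \<zeta>: "\<zeta> \<in> ball 0 1"
      have "\<zeta> * deriv r \<zeta> + of_real \<beta> * r \<zeta> = G \<zeta> / of_real \<alpha>2"
        unfolding dr[OF \<zeta>] r_def G_def \<beta>_def using a2
        by (simp add: field_simps power2_eq_square)
      then have "norm (\<zeta> * deriv r \<zeta> + of_real \<beta> * r \<zeta>) = norm (G \<zeta>) / \<alpha>2"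
        using a2 by (simp add: norm_divide)
      also have "\<dots> \<le> 2 * norm \<zeta> / \<alpha>2" using Gb[OF \<zeta>] a2 by (simp add: divide_right_mono)
      finally show "norm (\<zeta> * deriv r \<zeta> + of_real \<beta> * r \<zeta>) \<le> 2 / \<alpha>2 * norm \<zeta>" by simp
    qed
    also have "\<dots> = (2 / \<alpha>1) * norm z" unfolding b1 using a1 a2 by (simp add: field_simps)
    finally show ?thesis .
  qed
  have pb: "norm (p z - 1) \<le> (2 / \<alpha>1) * norm z" if z: "z \<in> ball 0 1" for z
    using step2[OF hp _ z, of "2 / \<alpha>1"] rb p0 unfolding r_def by simp
  have ebig: "exp 1 > (2.44::real)" by (rule e_bound)
  have s2: "sqrt 2 > (1.41::real)" by (rule real_less_rsqrt) (simp add: power2_eq_square)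
  have key: "2 / \<alpha>1 < 1 - 1 / exp 1"
  proof -
    have "\<alpha>1 > sqrt 2 * exp 1" using a12 a2 by linarith
    then have "\<alpha>1 * (exp 1 - 1) > sqrt 2 * exp 1 * (exp 1 - 1)" using ebig by simp
    moreover have "sqrt 2 * (exp 1 - 1) > 2"
    proof -
      have "sqrt 2 * (exp 1 - 1) > 1.41 * 1.44"
        using s2 ebig by (intro mult_strict_mono) auto
      then show ?thesis by simp
    qed
    then have "sqrt 2 * exp 1 * (exp 1 - 1) > 2 * exp 1" by (simp add: mult.commute mult.left_commute)
    ultimately have "\<alpha>1 * (exp 1 - 1) > 2 * exp 1" by linarith
    then show ?thesis using a1 by (simp add: field_simps)
  qed
  have pn: "norm (p z - 1) < 1 - 1 / exp 1" if z: "z \<in> ball 0 1" for z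
  proof -
    have "(2 / \<alpha>1) * norm z \<le> 2 / \<alpha>1" using z a1 by (simp add: divide_right_mono)
    then show ?thesis using pb[OF z] key by linarith
  qed
  show ?thesis unfolding subordinate_def
  proof (intro exI conjI ballI)
    have "p z \<notin> \<real>\<^sub>\<le>\<^sub>0" if z: "z \<in> ball 0 1" for z
    proof -
      have "1 / exp (1::real) > 0" by simp
      then have "norm (p z - 1) < 1" using pn[OF z] by linarith
      then have "\<bar>Re (p z - 1)\<bar> < 1" using abs_Re_le_cmod le_less_trans by blast
      then show ?thesis by (auto simp: complex_nonpos_Reals_iff)
    qed
    then show "(\<lambda>z. Ln (p z)) holomorphic_on ball 0 1" using hp by (intro holomorphic_intros)
    show "(\<lambda>z. Ln (p z)) ` ball 0 1 \<subseteq> ball 0 1"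
    proof
      fix y assume "y \<in> (\<lambda>z. Ln (p z)) ` ball 0 1"
      then obtain z where z: "z \<in> ball 0 1" and y: "y = Ln (p z)" by blast
      define \<epsilon> where "\<epsilon> = p z - 1"
      have en: "norm \<epsilon> < 1 - 1 / exp 1" using pn[OF z] unfolding \<epsilon>_def .
      have ep: "1 / exp (1::real) > 0" by simp
      then have "norm \<epsilon> < 1" using en by linarith
      then have "norm y \<le> - ln (1 - norm \<epsilon>)" unfolding y \<epsilon>_def using ln_bound[of \<epsilon>] \<epsilon>_def by simp
      also have "\<dots> < - ln (1 / exp 1)"
      proof -
        have "ln (1 / exp 1) < ln (1 - norm \<epsilon>)"
          using en ep by (subst ln_less_cancel_iff) linarith+
        then show ?thesis by linarith
      qed
      also have "\<dots> = 1" by (simp add: ln_div)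
      finally show "y \<in> ball 0 1" by simp
    qed
    show "Ln (p 0) = 0" using p0 by simp
    fix z :: complex assume z: "z \<in> ball 0 1"
    have "p z \<noteq> 0"
    proof
      assume "p z = 0"
      moreover have "1 / exp (1::real) > 0" by simp
      ultimately show False using pn[OF z] by simp
    qed
    then show "p z = exp (Ln (p z))" by simp
  qed
qed

end
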